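(* Let $n\geq2$. Every nonzero homogeneous harmonic polynomial $h$ on $\mathbb{R}^{n+1}$ which is $(n+2)$-symmetric and satisfies $\int_{B_1}h(y)\,dy=0$ has degree at least $3$.
   Context: Fix $n+2$ points $q_1,\dots,q_{n+2}\in\mathbb{S}^n\subset\mathbb{R}^{n+1}$ spread evenly on $\mathbb{S}^n$ (vertices of an inscribed regular simplex). $\mathcal{S}_{n+2}(q)$ is the set of rotations $\phi\in SO(n+1)$ mapping $\{q_1,\dots,q_{n+2}\}$ onto itself; $h$ is $(n+2)$-symmetric if $h\circ\phi=h$ for all $\phi\in\mathcal{S}_{n+2}(q)$. $B_1$ is the unit ball of $\mathbb{R}^{n+1}$. *)

theory Defs
  imports "HOL-Analysis.Analysis"
begin

definition monomial_fn :: "('n::finite \<Rightarrow> nat) \<Rightarrow> real^'n \<Rightarrow> real" where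
  "monomial_fn \<alpha> x = (\<Prod>i\<in>UNIV. (x $ i) ^ (\<alpha> i))"

definition homogeneous_poly :: "nat \<Rightarrow> (real^'n::finite \<Rightarrow> real) \<Rightarrow> bool" where
  "homogeneous_poly d h \<longleftrightarrow>
     (\<exists>c :: ('n \<Rightarrow> nat) \<Rightarrow> real.
        h = (\<lambda>x. \<Sum>\<alpha>\<in>{\<alpha>. sum \<alpha> UNIV = d}. c \<alpha> * monomial_fn \<alpha> x))"

definition second_partial :: "'n::finite \<Rightarrow> (real^'n \<Rightarrow> real) \<Rightarrow> real^'n \<Rightarrow> real" where
  "second_partial i h x =
     deriv (\<lambda>t. deriv (\<lambda>s. h (x + s *\<^sub>R axis i 1)) t) 0"

definition laplacian :: "(real^'n::finite \<Rightarrow> real) \<Rightarrow> real^'n \<Rightarrow> real" where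
  "laplacian h x = (\<Sum>i\<in>UNIV. second_partial i h x)"

definition harmonic :: "(real^'n::finite \<Rightarrow> real) \<Rightarrow> bool" where
  "harmonic h \<longleftrightarrow> (\<forall>x. laplacian h x = 0)"

definition sym_rotations :: "(real^'n::finite) set \<Rightarrow> (real^'n^'n) set" where
  "sym_rotations Q = {A. orthogonal_matrix A \<and> det A = 1 \<and> (\<lambda>x. A *v x) ` Q = Q}"

definition symmetric_wrt :: "(real^'n::finite) set \<Rightarrow> (real^'n \<Rightarrow> real) \<Rightarrow> bool" where
  "symmetric_wrt Q h \<longleftrightarrow> (\<forall>A\<in>sym_rotations Q. \<forall>x. h (A *v x) = h x)"

end

theory Submission
  imports Defs
begin


lemma aux2: "(N::real) \<ge> 0 \<Longrightarrow> ((N+1)/(N+2)) * (1 + 1/(N+1)) = 1"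
proof -
  assume "N \<ge> 0" then have a: "N+1 \<noteq> 0" "N+2 \<noteq> 0" by auto
  have "1 + 1/(N+1) = (N+2)/(N+1)" using a by (simp add: field_simps)
  then show ?thesis using a by simp
qed
lemma aux1: "(N::real) \<ge> 0 \<Longrightarrow> ((N+1)/(N+2)) * (2 + 2/(N+1)) = 2"
proof -
  assume "N \<ge> 0"
  then have "((N+1)/(N+2)) * (1 + 1/(N+1)) = 1" by (rule aux2)
  moreover have e: "2 + 2/(N+1) = 2 * (1 + 1/(N+1))" by (simp add: distrib_left)
  ultimately show ?thesis unfolding e by (metis mult.left_commute mult.right_neutral)
qed
lemma aux3: "(N::real) \<ge> 0 \<Longrightarrow> ((N+1)/(N+2)) * (- 1 - 1/(N+1)) = -1"
proof -
  assume "N \<ge> 0" then have a: "N+1 \<noteq> 0" "N+2 \<noteq> 0" by auto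
  have "- 1 - 1/(N+1) = - ((N+2)/(N+1))" using a by (simp add: field_simps)
  then show ?thesis using a by simp
qed
lemma refl_inner:
  fixes u x y :: "real^'n::finite"
  assumes "c * (u \<bullet> u) = 2"
  shows "(x - (c*(u\<bullet>x)) *\<^sub>R u) \<bullet> (y - (c*(u\<bullet>y)) *\<^sub>R u) = x \<bullet> y"
proof -
  have "(x - (c*(u\<bullet>x)) *\<^sub>R u) \<bullet> (y - (c*(u\<bullet>y)) *\<^sub>R u)
     = x \<bullet> y - 2 * c * (u\<bullet>x) * (u\<bullet>y) + c * (u\<bullet>x) * (u\<bullet>y) * (c * (u \<bullet> u))"
    by (simp add: inner_diff_left inner_diff_right inner_commute algebra_simps)
  also have "\<dots> = x \<bullet> y" using assms by simp
  finally show ?thesis .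
qed

lemma aux_field: "(x::real) \<noteq> 0 \<Longrightarrow> (S*(-1/x) + c*(1+1/x))*x = c*(x+1) - S"
  by (simp add: field_simps)

locale simplex =
  fixes n :: nat and q :: "nat \<Rightarrow> real^'n::finite"
  assumes dim: "CARD('n) = n + 1"
    and q_sphere: "\<forall>i<n+2. norm (q i) = 1"
    and q_simplex: "\<forall>i<n+2. \<forall>j<n+2. i \<noteq> j \<longrightarrow> q i \<bullet> q j = - 1 / real (n + 1)"
    and n2: "n \<ge> 2"
begin

lemma qq: "i < n+2 \<Longrightarrow> j < n+2 \<Longrightarrow> q i \<bullet> q j = (if i = j then 1 else - 1 / real (n + 1))"
proof (cases "i = j")
  case True
  assume "i < n+2"
  then have "norm (q i) = 1" using q_sphere by auto
  then have "q i \<bullet> q i = 1" by (simp add: dot_square_norm)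
  then show ?thesis using True by simp
qed (use q_simplex in auto)

lemma sum_row: "i < n+2 \<Longrightarrow> (\<Sum>j<n+2. q i \<bullet> q j) = 0"
proof -
  assume i: "i < n+2"
  have "(\<Sum>j<n+2. q i \<bullet> q j) = (\<Sum>j\<in>{..<n+2}-{i}. q i \<bullet> q j) + q i \<bullet> q i"
    using sum.remove[of "{..<n+2}" i "\<lambda>j. q i \<bullet> q j"] i by (simp only: finite_lessThan lessThan_iff)
  also have "(\<Sum>j\<in>{..<n+2}-{i}. q i \<bullet> q j) = (\<Sum>j\<in>{..<n+2}-{i}. - 1 / real (n + 1))"
    by (rule sum.cong) (use i qq in auto)
  also have "\<dots> = real (n+1) * (- 1 / real (n + 1))" using i by simp
  finally show ?thesis using qq[OF i i] by simp
qed

lemma sum_q: "(\<Sum>j<n+2. q j) = 0"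
proof -
  let ?s = "\<Sum>j<n+2. q j"
  have "?s \<bullet> ?s = (\<Sum>i<n+2. q i \<bullet> ?s)" by (rule inner_sum_left)
  also have "\<dots> = (\<Sum>i<n+2. (\<Sum>j<n+2. q i \<bullet> q j))" by (simp only: inner_sum_right)
  also have "\<dots> = 0" using sum_row by simp
  finally show ?thesis by simp
qed

lemma q_inj: "inj_on q {..<n+2}"
proof (rule inj_onI)
  fix i j assume i: "i \<in> {..<n+2}" and j: "j \<in> {..<n+2}" and e: "q i = q j"
  show "i = j"
  proof (rule ccontr)
    assume "i \<noteq> j"
    then have "q i \<bullet> q j = - 1 / real (n + 1)" using qq i j by auto
    moreover have "q i \<bullet> q j = 1" using e qq j by auto
    ultimately show False by (simp add: divide_simps)
  qed
qed

lemma indep: "independent (q ` {..n})"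
proof (rule real_vector.independent_if_scalars_zero)
  show "finite (q ` {..n})" by simp
next
  fix f x assume s: "(\<Sum>x\<in>q ` {..n}. f x *\<^sub>R x) = 0" and x: "x \<in> q ` {..n}"
  have inj: "inj_on q {..n}" using q_inj by (rule inj_on_subset) auto
  define c where "c i = f (q i)" for i
  have s2: "(\<Sum>i\<le>n. c i *\<^sub>R q i) = 0" using s by (simp add: sum.reindex[OF inj] c_def)
  define S where "S = (\<Sum>i\<le>n. c i)"
  have cj: "c j = S / real (n+2)" if j: "j \<le> n" for j
  proof -
    have "0 = (\<Sum>i\<le>n. c i *\<^sub>R q i) \<bullet> q j" using s2 by simp
    also have "\<dots> = (\<Sum>i\<le>n. c i * (q i \<bullet> q j))" by (simp add: inner_sum_left)
    also have "\<dots> = (\<Sum>i\<le>n. c i * (if i = j then 1 else - 1 / real (n + 1)))"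
      by (rule sum.cong) (use j qq in auto)
    also have "\<dots> = (\<Sum>i\<le>n. c i * (- 1 / real (n + 1)) + (if i = j then c i * (1 + 1 / real (n+1)) else 0))"
      by (rule sum.cong) (auto simp: algebra_simps)
    also have "\<dots> = S * (- 1 / real (n + 1)) + c j * (1 + 1 / real (n+1))"
      using j by (simp only: sum.distrib S_def sum_distrib_right[symmetric] sum.delta finite_atMost atMost_iff if_True)
    finally have z: "0 = S * (- 1 / real (n + 1)) + c j * (1 + 1 / real (n+1))" .
    have "(S * (- 1 / real (n + 1)) + c j * (1 + 1 / real (n+1))) * real (n+1) = c j * (real (n+1) + 1) - S"
      by (rule aux_field) simp
    then have "c j * (real (n+1) + 1) = S" using z by simp
    then show ?thesis by (simp add: field_simps)
  qed
  have "(\<Sum>i\<le>n. c i) = (\<Sum>i\<le>n. S / real (n+2))" by (rule sum.cong) (simp_all add: cj)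
  then have "S = (\<Sum>i\<le>n. S / real (n+2))" by (simp only: S_def)
  then have "S = real (n+1) * S / real (n+2)" by simp
  then have "S = 0" by (simp add: field_simps)
  with x cj show "f x = 0" by (auto simp: c_def)
qed

lemma span_q: "span (q ` {..<n+2}) = UNIV"
proof -
  have "dim (q ` {..n}) = card (q ` {..n})" using indep by (rule real_vector.dim_eq_card_independent)
  also have "\<dots> = n + 1" using q_inj by (subst card_image) (auto intro: inj_on_subset)
  finally have "span (q ` {..n}) = UNIV" using dim by (simp add: eucl.dim_eq_full[symmetric] DIM_cart)
  moreover have "span (q ` {..n}) \<subseteq> span (q ` {..<n+2})" by (rule span_mono) auto
  ultimately show ?thesis by auto
qed

end



context simplex begin

definition refl :: "nat \<Rightarrow> nat \<Rightarrow> real^'n \<Rightarrow> real^'n" where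
  "refl i j x = x - ((real (n+1) / real (n+2)) * ((q i - q j) \<bullet> x)) *\<^sub>R (q i - q j)"

lemma refl_linear: "linear (refl i j)"
  unfolding refl_def by (rule linearI) (simp_all add: inner_add_right distrib_left scaleR_add_left scaleR_right_diff_distrib mult.left_commute)

lemma refl_inner2: "i < n+2 \<Longrightarrow> j < n+2 \<Longrightarrow> i \<noteq> j \<Longrightarrow> refl i j x \<bullet> refl i j y = x \<bullet> y"
proof -
  assume i: "i < n+2" and j: "j < n+2" and ij: "i \<noteq> j"
  have "(q i - q j) \<bullet> (q i - q j) = q i \<bullet> q i - 2 * (q i \<bullet> q j) + q j \<bullet> q j"
    by (simp add: inner_diff_left inner_diff_right inner_commute)
  also have "\<dots> = 2 + 2 / real (n+1)" using qq[OF i j] qq[OF i i] qq[OF j j] ij by simp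
  finally have uu: "(q i - q j) \<bullet> (q i - q j) = 2 + 2 / real (n+1)" .
  have "(real (n+1) / real (n+2)) * ((q i - q j) \<bullet> (q i - q j)) = 2"
    unfolding uu of_nat_add of_nat_1 of_nat_numeral by (rule aux1) simp
  then show ?thesis unfolding refl_def by (rule refl_inner)
qed

lemma refl_q:
  assumes i: "i < n+2" and j: "j < n+2" and ij: "i \<noteq> j" and l: "l < n+2"
  shows "refl i j (q l) = (if l = i then q j else if l = j then q i else q l)"
proof -
  have c: "(q i - q j) \<bullet> q l = (if l = i then 1 + 1 / real (n+1) else if l = j then - 1 - 1 / real (n+1) else 0)"
    using qq[OF i l] qq[OF j l] ij by (auto simp: inner_diff_left)
  have e1: "(real (n+1) / real (n+2)) * (1 + 1 / real (n+1)) = 1" unfolding of_nat_add of_nat_1 of_nat_numeral by (rule aux2) simp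
  have e2: "(real (n+1) / real (n+2)) * (- 1 - 1 / real (n+1)) = -1" unfolding of_nat_add of_nat_1 of_nat_numeral by (rule aux3) simp
  show ?thesis unfolding refl_def c using e1 e2 by auto
qed

definition rot :: "nat \<Rightarrow> nat \<Rightarrow> nat \<Rightarrow> real^'n \<Rightarrow> real^'n" where
  "rot i j k = refl i j \<circ> refl j k"

lemma rot_linear: "linear (rot i j k)"
  unfolding rot_def by (intro linear_compose refl_linear)

lemma rot_q:
  assumes i: "i < n+2" and j: "j < n+2" and k: "k < n+2" and d: "i \<noteq> j" "j \<noteq> k" "i \<noteq> k" and l: "l < n+2"
  shows "rot i j k (q l) = (if l = i then q j else if l = j then q k else if l = k then q i else q l)"
  using d refl_q[OF j k d(2) l] refl_q[OF i j d(1) i] refl_q[OF i j d(1) j] refl_q[OF i j d(1) k] refl_q[OF i j d(1) l]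
  unfolding rot_def by auto

lemma rot_cube:
  assumes i: "i < n+2" and j: "j < n+2" and k: "k < n+2" and d: "i \<noteq> j" "j \<noteq> k" "i \<noteq> k"
  shows "rot i j k (rot i j k (rot i j k x)) = x"
proof -
  let ?f = "rot i j k"
  have l3: "linear (?f \<circ> ?f \<circ> ?f)" by (intro linear_compose rot_linear)
  have lin: "linear (\<lambda>x. ?f (?f (?f x)) - x)"
    using linear_compose_sub[OF l3 linear_id] by (simp add: o_def id_def)
  have "?f (?f (?f x)) - x = 0"
  proof (rule real_vector.linear_eq_0_on_span[OF lin])
    show "x \<in> span (q ` {..<n+2})" using span_q by simp
  next
    fix y assume "y \<in> q ` {..<n+2}"
    then obtain l where l: "l < n+2" and y: "y = q l" by auto
    have ri: "?f (q i) = q j" using rot_q[OF i j k d i] by simp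
    have rj: "?f (q j) = q k" using rot_q[OF i j k d j] d by simp
    have rk: "?f (q k) = q i" using rot_q[OF i j k d k] d by simp
    have "?f (?f (?f (q l))) = q l"
    proof -
      consider "l = i" | "l = j" | "l = k" | "l \<noteq> i \<and> l \<noteq> j \<and> l \<noteq> k" by blast
      then show ?thesis
      proof cases
        case 4
        then have "?f (q l) = q l" using rot_q[OF i j k d l] by simp
        then show ?thesis by simp
      qed (simp_all add: ri rj rk)
    qed
    then show "?f (?f (?f y)) - y = 0" unfolding y by simp
  qed
  then show ?thesis by simp
qed

lemma rot_orth: 
  assumes i: "i < n+2" and j: "j < n+2" and k: "k < n+2" and d: "i \<noteq> j" "j \<noteq> k" "i \<noteq> k"
  shows "orthogonal_transformation (rot i j k)"
  unfolding orthogonal_transformation_def using rot_linear refl_inner2 i j k d by (auto simp: rot_def)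

lemma rot_mat: 
  assumes i: "i < n+2" and j: "j < n+2" and k: "k < n+2" and d: "i \<noteq> j" "j \<noteq> k" "i \<noteq> k"
  shows "matrix (rot i j k) \<in> sym_rotations (q ` {..<n+2})"
    and "\<And>x. matrix (rot i j k) *v x = rot i j k x"
proof -
  let ?f = "rot i j k" let ?M = "matrix ?f"
  show mv: "\<And>x. ?M *v x = ?f x" by (rule matrix_works) (simp add: linear_matrix_vector_mul_eq rot_linear)
  have om: "orthogonal_matrix ?M" using rot_orth[OF assms] orthogonal_transformation_matrix by blast
  have "?f \<circ> ?f \<circ> ?f = id" using rot_cube[OF assms] by auto
  then have "matrix (?f \<circ> ?f \<circ> ?f) = mat 1" by (simp add: matrix_id_mat_1)
  then have "?M ** ?M ** ?M = mat 1" using rot_linear by (simp add: matrix_compose linear_compose)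
  then have "det ?M * det ?M * det ?M = 1" by (metis det_mul det_I)
  then have dt: "det ?M = 1" using det_orthogonal_matrix[OF om] by auto
  have im: "?f ` (q ` {..<n+2}) = q ` {..<n+2}"
  proof
    show "?f ` (q ` {..<n+2}) \<subseteq> q ` {..<n+2}" using rot_q[OF assms] assms by auto
  next
    show "q ` {..<n+2} \<subseteq> ?f ` (q ` {..<n+2})"
    proof
      fix y assume "y \<in> q ` {..<n+2}"
      then obtain l where l: "l < n+2" and y: "y = q l" by auto
      define l' where "l' = (if l = j then i else if l = k then j else if l = i then k else l)"
      have "l' < n+2" using l assms by (auto simp: l'_def)
      moreover have "?f (q l') = y" using rot_q[OF assms] assms l unfolding y l'_def by auto
      ultimately show "y \<in> ?f ` (q ` {..<n+2})" by blast
    qed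
  qed
  show "?M \<in> sym_rotations (q ` {..<n+2})"
    unfolding sym_rotations_def using om dt im mv by simp
qed

end



context simplex begin

lemma third: "i < n+2 \<Longrightarrow> j < n+2 \<Longrightarrow> \<exists>k<n+2. k \<noteq> i \<and> k \<noteq> j"
proof -
  have "\<exists>k\<in>{0,1,2::nat}. k \<noteq> i \<and> k \<noteq> j" by auto
  then obtain k where "k\<in>{0,1,2::nat}" "k \<noteq> i \<and> k \<noteq> j" by blast
  moreover then have "k < n+2" using n2 by auto
  ultimately show ?thesis by blast
qed

lemma lin_inv:
  fixes L :: "real^'n \<Rightarrow> real"
  assumes lin: "linear L"
    and inv: "\<And>i j k x. i<n+2 \<Longrightarrow> j<n+2 \<Longrightarrow> k<n+2 \<Longrightarrow> i\<noteq>j \<Longrightarrow> j\<noteq>k \<Longrightarrow> i\<noteq>k \<Longrightarrow> L (rot i j k x) = L x"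
  shows "L x = 0"
proof -
  have eq: "L (q l) = L (q 0)" if l: "l < n+2" for l
  proof (cases "l = 0")
    case False
    obtain k where k: "k < n+2" "k \<noteq> 0" "k \<noteq> l" using third[OF _ l, of 0] by auto
    have "L (q 0) = L (rot 0 l k (q 0))" using inv[of 0 l k] k l False by auto
    also have "rot 0 l k (q 0) = q l" using rot_q[of 0 l k 0] k l False by auto
    finally show ?thesis by simp
  qed simp
  have "0 = L (\<Sum>j<n+2. q j)" using sum_q lin by (simp add: linear_0)
  also have "\<dots> = (\<Sum>j<n+2. L (q j))" by (rule linear_sum[OF lin])
  also have "\<dots> = (\<Sum>j<n+2. L (q 0))" by (rule sum.cong[OF refl]) (rule eq, simp)
  finally have "L (q 0) = 0" by simp
  then have z: "L y = 0" if yq: "y \<in> q ` {..<n+2}" for y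
  proof -
    obtain l where "l < n+2" "y = q l" using yq by blast
    then show ?thesis using eq[of l] \<open>L (q 0) = 0\<close> by simp
  qed
  show ?thesis by (rule real_vector.linear_eq_0_on_span[OF lin, of "q ` {..<n+2}"]) (use z span_q in auto)
qed

lemma quad_inv:
  fixes P :: "real^'n \<Rightarrow> real^'n \<Rightarrow> real"
  assumes lin: "\<And>v. linear (\<lambda>u. P u v)" and sym: "\<And>u v. P u v = P v u"
    and inv: "\<And>i j k x. i<n+2 \<Longrightarrow> j<n+2 \<Longrightarrow> k<n+2 \<Longrightarrow> i\<noteq>j \<Longrightarrow> j\<noteq>k \<Longrightarrow> i\<noteq>k \<Longrightarrow> P (rot i j k x) (rot i j k x) = P x x"
  shows "P x x = P (q 0) (q 0) * (x \<bullet> x)"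
proof -
  have lin2: "linear (\<lambda>v. P u v)" for u using lin[of u] by (simp add: sym)
  have addl: "P (u + v) w = P u w + P v w" for u v w using linear_add[OF lin[of w]] .
  have addr: "P w (u + v) = P w u + P w v" for u v w using linear_add[OF lin2[of w]] .
  have expand: "P (u+v) (u+v) = P u u + 2 * P u v + P v v" for u v
    using addl addr sym[of v u] by simp
  have inv2: "P (rot i j k u) (rot i j k v) = P u v"
    if "i<n+2" "j<n+2" "k<n+2" "i\<noteq>j" "j\<noteq>k" "i\<noteq>k" for i j k u v
  proof -
    have "P (rot i j k (u+v)) (rot i j k (u+v)) = P (u+v) (u+v)" using inv that by blast
    moreover have "rot i j k (u+v) = rot i j k u + rot i j k v" using linear_add[OF rot_linear] .
    ultimately show ?thesis using expand inv[OF that, of u] inv[OF that, of v] by simp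
  qed
  define a where "a = P (q 0) (q 0)"
  define f where "f i j = P (q i) (q j)" for i j
  have diag: "f l l = a" if l: "l < n+2" for l
  proof (cases "l = 0")
    case False
    obtain k where k: "k < n+2" "k \<noteq> 0" "k \<noteq> l" using third[OF _ l, of 0] by auto
    have "a = P (rot 0 l k (q 0)) (rot 0 l k (q 0))" unfolding a_def using inv[of 0 l k] k l False by auto
    also have "rot 0 l k (q 0) = q l" using rot_q[of 0 l k 0] k l False by auto
    finally show ?thesis by (simp add: f_def)
  qed (simp add: a_def f_def)
  have step: "f i j = f j k" if "i<n+2" "j<n+2" "k<n+2" "i\<noteq>j" "j\<noteq>k" "i\<noteq>k" for i j k
  proof -
    have "f i j = P (rot i j k (q i)) (rot i j k (q j))" unfolding f_def using inv2 that by simp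
    also have "\<dots> = f j k" using rot_q[OF that, of i] rot_q[OF that, of j] that by (simp add: f_def)
    finally show ?thesis .
  qed
  have fsym: "f i j = f j i" for i j by (simp add: f_def sym)
  have A: "f i j = f i k" if "i<n+2" "j<n+2" "k<n+2" "i\<noteq>j" "i\<noteq>k" for i j k
  proof (cases "j = k")
    case False
    have "f i j = f j i" by (rule fsym)
    also have "\<dots> = f i k" by (rule step) (use that False in auto)
    finally show ?thesis .
  qed simp
  define b where "b = f 0 1"
  have off: "f i j = b" if "i<n+2" "j<n+2" "i\<noteq>j" for i j
  proof (cases "i = 1")
    case True
    have "f i j = f 1 0" unfolding True by (rule A) (use that True in auto)
    also have "\<dots> = b" unfolding b_def by (rule fsym)
    finally show ?thesis .
  next
    case False
    have "f i j = f i 1" by (rule A) (use that False in auto)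
    also have "\<dots> = f 1 i" by (rule fsym)
    also have "\<dots> = f 1 0" by (rule A) (use that False in auto)
    also have "\<dots> = b" unfolding b_def by (rule fsym)
    finally show ?thesis .
  qed
  have "0 = P (q 0) (\<Sum>j<n+2. q j)" using sum_q linear_0[OF lin2] by simp
  also have "\<dots> = (\<Sum>j<n+2. f 0 j)" unfolding f_def by (rule linear_sum[OF lin2])
  also have "\<dots> = f 0 0 + (\<Sum>j\<in>{..<n+2}-{0}. f 0 j)"
    by (rule sum.remove) auto
  also have "(\<Sum>j\<in>{..<n+2}-{0}. f 0 j) = (\<Sum>j\<in>{..<n+2}-{0}. b)"
    by (rule sum.cong) (auto intro: off)
  finally have "0 = a + real (n+1) * b" using diag[of 0] by simp
  then have bval: "b = a * (- 1 / real (n+1))" by (simp add: field_simps)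
  have fq: "f i j = a * (q i \<bullet> q j)" if "i<n+2" "j<n+2" for i j
    using qq[OF that] diag off bval that by auto
  define Q where "Q u v = P u v - a * (u \<bullet> v)" for u v
  have linQ: "linear (\<lambda>u. Q u v)" for v
  proof (rule linearI)
    fix u w :: "real^'n" and c :: real
    show "Q (u + w) v = Q u v + Q w v" unfolding Q_def using linear_add[OF lin[of v]] by (simp add: inner_add_left algebra_simps)
    show "Q (c *\<^sub>R u) v = c *\<^sub>R Q u v" unfolding Q_def using linear_scale[OF lin[of v]] by (simp add: algebra_simps)
  qed
  have Qsym: "Q u v = Q v u" for u v by (simp add: Q_def sym inner_commute)
  have Q1: "Q u (q j) = 0" if j: "j < n+2" for u j
  proof (rule real_vector.linear_eq_0_on_span[OF linQ])
    show "u \<in> span (q ` {..<n+2})" by (metis span_q UNIV_I)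
  next
    fix y assume "y \<in> q ` {..<n+2}"
    then obtain i where "i < n+2" "y = q i" by auto
    then show "Q y (q j) = 0" using fq[of i j] j by (simp add: Q_def f_def)
  qed
  have "Q x x = 0"
  proof (rule real_vector.linear_eq_0_on_span[of "\<lambda>v. Q x v"])
    show "linear (\<lambda>v. Q x v)" using linQ[of x] by (simp add: Qsym)
    show "x \<in> span (q ` {..<n+2})" by (metis span_q UNIV_I)
  next
    fix y assume "y \<in> q ` {..<n+2}"
    then show "Q x y = 0" using Q1 by auto
  qed
  then show ?thesis by (simp add: Q_def a_def)
qed

end



lemma monomial_upd:
  fixes x :: "real^'n::finite"
  shows "monomial_fn (\<alpha>(i := Suc (\<alpha> i))) x = x $ i * monomial_fn \<alpha> x"
proof -
  have "monomial_fn (\<alpha>(i := Suc (\<alpha> i))) x = (x $ i) ^ Suc (\<alpha> i) * (\<Prod>k\<in>UNIV-{i}. (x $ k) ^ (\<alpha> k))"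
    unfolding monomial_fn_def by (subst prod.remove[of UNIV i]) auto
  also have "\<dots> = x $ i * ((x $ i) ^ (\<alpha> i) * (\<Prod>k\<in>UNIV-{i}. (x $ k) ^ (\<alpha> k)))" by simp
  also have "(x $ i) ^ (\<alpha> i) * (\<Prod>k\<in>UNIV-{i}. (x $ k) ^ (\<alpha> k)) = monomial_fn \<alpha> x"
    unfolding monomial_fn_def by (subst prod.remove[of UNIV i]) auto
  finally show ?thesis .
qed

lemma mono_prod:
  fixes \<alpha> :: "'n::finite \<Rightarrow> nat"
  shows "sum \<alpha> UNIV = d \<Longrightarrow> \<exists>g. \<forall>x::real^'n. monomial_fn \<alpha> x = (\<Prod>k<d. x $ g k)"
proof (induction d arbitrary: \<alpha>)
  case 0
  then have "\<alpha> = (\<lambda>_. 0)" by (auto simp: sum_eq_0_iff)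
  then show ?case by (simp add: monomial_fn_def)
next
  case (Suc d)
  obtain i where i: "\<alpha> i > 0"
  proof (rule ccontr)
    assume "\<not> thesis"
    then have "\<forall>i. \<alpha> i = 0" using that by auto
    then show False using Suc.prems by simp
  qed
  define \<beta> where "\<beta> = \<alpha>(i := \<alpha> i - 1)"
  have ab: "\<alpha> = \<beta>(i := Suc (\<beta> i))" using i by (auto simp: \<beta>_def)
  have "sum \<alpha> UNIV = \<alpha> i + sum \<alpha> (UNIV - {i})" by (subst sum.remove[of UNIV i]) auto
  moreover have "sum \<beta> UNIV = \<beta> i + sum \<beta> (UNIV - {i})" by (subst sum.remove[of UNIV i]) auto
  moreover have "sum \<beta> (UNIV - {i}) = sum \<alpha> (UNIV - {i})" by (rule sum.cong) (auto simp: \<beta>_def)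
  ultimately have "sum \<beta> UNIV = d" using Suc.prems i by (simp add: \<beta>_def)
  then obtain g where g: "\<forall>x::real^'n. monomial_fn \<beta> x = (\<Prod>k<d. x $ g k)" using Suc.IH by blast
  have "monomial_fn \<alpha> x = (\<Prod>k<Suc d. x $ (g(d := i)) k)" for x :: "real^'n"
  proof -
    have "monomial_fn \<alpha> x = x $ i * monomial_fn \<beta> x" unfolding ab by (rule monomial_upd)
    also have "\<dots> = x $ i * (\<Prod>k<d. x $ g k)" using g by simp
    also have "(\<Prod>k<d. x $ g k) = (\<Prod>k<d. x $ (g(d := i)) k)" by (rule prod.cong) auto
    finally show ?thesis by (simp add: mult.commute)
  qed
  then show ?case by blast
qed

lemma laplacian_sq:
  fixes x :: "real^'n::finite"
  shows "laplacian (\<lambda>y. a * (y \<bullet> y)) x = 2 * a * real CARD('n)"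
proof -
  have sp: "second_partial i (\<lambda>y. a * (y \<bullet> y)) x = 2 * a" for i
  proof -
    have e: "(\<lambda>s. a * ((x + s *\<^sub>R axis i 1) \<bullet> (x + s *\<^sub>R axis i 1))) = (\<lambda>s. a * (x \<bullet> x) + 2 * a * (x $ i) * s + a * s ^ 2)"
      by (rule ext) (simp add: inner_add_left inner_add_right inner_axis inner_commute[of "axis i 1" x] algebra_simps power2_eq_square)
    have d1: "deriv (\<lambda>s. a * (x \<bullet> x) + 2 * a * (x $ i) * s + a * s ^ 2) t = 2 * a * (x $ i) + 2 * a * t" for t
      by (rule DERIV_imp_deriv) (auto intro!: derivative_eq_intros)
    have d2: "deriv (\<lambda>t. 2 * a * (x $ i) + 2 * a * t) 0 = 2 * a"
      by (rule DERIV_imp_deriv) (auto intro!: derivative_eq_intros)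
    show ?thesis unfolding second_partial_def e d1 d2 ..
  qed
  show ?thesis unfolding laplacian_def sp by simp
qed

lemma ball_const_integral:
  fixes C :: real
  assumes "integral (ball (0::real^'n::finite) 1) (\<lambda>x. C) = 0"
  shows "C = 0"
proof -
  have "integral (ball (0::real^'n) 1) (\<lambda>x. C) = integral (ball (0::real^'n) 1) (\<lambda>x. C *\<^sub>R (1::real))"
    by simp
  also have "\<dots> = C *\<^sub>R integral (ball (0::real^'n) 1) (\<lambda>x. 1)" by (rule integral_cmul)
  also have "integral (ball (0::real^'n) 1) (\<lambda>x. 1) = measure lebesgue (ball (0::real^'n) 1)"
    by (rule lmeasure_integral[symmetric]) simp
  also have "measure lebesgue (ball (0::real^'n) 1) = Henstock_Kurzweil_Integration.content (ball (0::real^'n) 1)" by simp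
  finally show ?thesis using assms content_ball_gt_0_iff[of "0::real^'n" 1] by auto
qed



theorem lemma8p2:
  fixes n d :: nat and q :: "nat \<Rightarrow> real^'n::finite" and h :: "real^'n \<Rightarrow> real"
  assumes dim: "CARD('n) = n + 1"
    and n2: "n \<ge> 2"
    and q_sphere: "\<forall>i<n+2. norm (q i) = 1"
    and q_simplex: "\<forall>i<n+2. \<forall>j<n+2. i \<noteq> j \<longrightarrow> q i \<bullet> q j = - 1 / real (n + 1)"
    and hom: "homogeneous_poly d h"
    and harm: "harmonic h"
    and nonzero: "h \<noteq> (\<lambda>x. 0)"
    and sym: "symmetric_wrt (q ` {..<n+2}) h"
    and int0: "integral (ball 0 1) h = 0"
  shows "d \<ge> 3"
proof (rule ccontr)
  assume "\<not> 3 \<le> d"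
  then have dcases: "d = 0 \<or> d = 1 \<or> d = 2" by auto
  interpret S: simplex n q using dim q_sphere q_simplex n2 by unfold_locales auto
  define A where "A = {\<alpha>::'n\<Rightarrow>nat. sum \<alpha> UNIV = d}"
  obtain c where hc: "h = (\<lambda>x. \<Sum>\<alpha>\<in>A. c \<alpha> * monomial_fn \<alpha> x)"
    using hom unfolding homogeneous_poly_def A_def by blast
  define G where "G \<alpha> = (SOME g. \<forall>x::real^'n. monomial_fn \<alpha> x = (\<Prod>k<d. x $ g k))" for \<alpha>
  have G: "monomial_fn \<alpha> x = (\<Prod>k<d. x $ G \<alpha> k)" if "\<alpha> \<in> A" for \<alpha> x
  proof -
    have "\<exists>g. \<forall>x::real^'n. monomial_fn \<alpha> x = (\<Prod>k<d. x $ g k)"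
      using mono_prod[of \<alpha> d] that by (simp add: A_def)
    from someI_ex[OF this] show ?thesis unfolding G_def by blast
  qed
  have hx: "h x = (\<Sum>\<alpha>\<in>A. c \<alpha> * (\<Prod>k<d. x $ G \<alpha> k))" for x
    unfolding hc by (rule sum.cong) (auto simp: G)
  have hinv: "h (S.rot i j k x) = h x"
    if "i<n+2" "j<n+2" "k<n+2" "i\<noteq>j" "j\<noteq>k" "i\<noteq>k" for i j k x
  proof -
    have "matrix (S.rot i j k) \<in> sym_rotations (q ` {..<n+2})" by (rule S.rot_mat(1)[OF that])
    then have "h (matrix (S.rot i j k) *v x) = h x" using sym unfolding symmetric_wrt_def by blast
    then show ?thesis using S.rot_mat(2)[OF that] by simp
  qed
  from dcases show False
  proof (elim disjE)
    assume d0: "d = 0"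
    have "h x = (\<Sum>\<alpha>\<in>A. c \<alpha>)" for x using hx[of x] d0 by simp
    then have hC: "h = (\<lambda>x. \<Sum>\<alpha>\<in>A. c \<alpha>)" by auto
    have "(\<Sum>\<alpha>\<in>A. c \<alpha>) = 0" using int0 unfolding hC by (rule ball_const_integral)
    then show False using nonzero hC by simp
  next
    assume d1: "d = 1"
    have hf: "h = (\<lambda>x. \<Sum>\<alpha>\<in>A. c \<alpha> * x $ G \<alpha> 0)" using hx d1 by auto
    have lin: "linear h"
      unfolding hf by (rule linearI) (simp_all add: sum.distrib sum_distrib_left algebra_simps)
    have "h x = 0" for x by (rule S.lin_inv[OF lin hinv])
    then show False using nonzero by auto
  next
    assume d2: "d = 2"
    define B where "B u v = (\<Sum>\<alpha>\<in>A. c \<alpha> * (u $ G \<alpha> 0 * v $ G \<alpha> 1))" for u v :: "real^'n"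
    have hB: "h x = B x x" for x
      using hx[of x] d2 by (simp add: B_def numeral_2_eq_2 mult.assoc)
    have linB1: "linear (\<lambda>u. B u v)" for v
      unfolding B_def by (rule linearI) (simp_all add: sum.distrib sum_distrib_left algebra_simps)
    have linB2: "linear (\<lambda>v. B u v)" for u
      unfolding B_def by (rule linearI) (simp_all add: sum.distrib sum_distrib_left algebra_simps)
    define P where "P u v = (B u v + B v u) / 2" for u v
    have linP: "linear (\<lambda>u. P u v)" for v
    proof (rule linearI)
      fix u w :: "real^'n" and r :: real
      show "P (u + w) v = P u v + P w v"
        unfolding P_def using linear_add[OF linB1[of v]] linear_add[OF linB2[of v]] by (simp add: field_simps)
      show "P (r *\<^sub>R u) v = r *\<^sub>R P u v"
        unfolding P_def using linear_scale[OF linB1[of v]] linear_scale[OF linB2[of v]] by (simp add: field_simps)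
    qed
    have Psym: "P u v = P v u" for u v by (simp add: P_def add.commute)
    have Pdiag: "P x x = h x" for x by (simp add: P_def hB)
    have Pinv: "P (S.rot i j k x) (S.rot i j k x) = P x x"
      if "i<n+2" "j<n+2" "k<n+2" "i\<noteq>j" "j\<noteq>k" "i\<noteq>k" for i j k x
      using hinv[OF that] by (simp add: Pdiag)
    define a where "a = P (q 0) (q 0)"
    have "P x x = a * (x \<bullet> x)" for x unfolding a_def by (rule S.quad_inv[OF linP Psym Pinv])
    then have ha: "h = (\<lambda>x. a * (x \<bullet> x))" using Pdiag by auto
    have "laplacian h 0 = 0" using harm by (simp add: harmonic_def)
    then have "2 * a * real CARD('n) = 0" unfolding ha laplacian_sq .
    then have "a = 0" by simp
    then show False using nonzero ha by simp
  qed
qed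

end
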